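(* Let $P$ be a poset and let $\mathcal{U}_1\subseteq\mathcal{U}_2\subseteq\mathcal{U}_3$ be frame-generating join-specifications for $P$. For $k\in\{1,2,3\}$ let $\eta_k:P\to\mathcal{I}_{\mathcal{U}_k}$ be $p\mapsto p^\downarrow$. Then there are frame morphisms $\phi_1:\mathcal{I}_{\mathcal{U}_1}\to\mathcal{I}_{\mathcal{U}_2}$, $\phi_2:\mathcal{I}_{\mathcal{U}_2}\to\mathcal{I}_{\mathcal{U}_3}$ and $\phi:\mathcal{I}_{\mathcal{U}_1}\to\mathcal{I}_{\mathcal{U}_3}$ with $\phi=\phi_2\circ\phi_1$, $\phi_1\circ\eta_1=\eta_2$, $\phi_2\circ\eta_2=\eta_3$ and $\phi\circ\eta_1=\eta_3$; moreover $\phi_1,\phi_2,\phi$ are the unique frame morphisms satisfying these respective equations with the $\eta$ maps.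
   Context: A join-specification for $P$ is a set $\mathcal{U}\subseteq\wp(P)$ such that $\bigvee S$ exists in $P$ for every $S\in\mathcal{U}$ and $\{p\}\in\mathcal{U}$ for every $p\in P$. A $\mathcal{U}$-ideal is a down-closed $C\subseteq P$ with $\bigvee S\in C$ whenever $S\in\mathcal{U}$, $S\subseteq C$; $\mathcal{I}_{\mathcal{U}}$ is the complete lattice of $\mathcal{U}$-ideals under inclusion; $\mathcal{U}$ is frame-generating if $\mathcal{I}_{\mathcal{U}}$ is a frame. A frame morphism is a lattice homomorphism preserving arbitrary joins. *)

theory Defs
  imports Main
begin

text \<open>The poset P is modelled as a type of class order (P = UNIV).\<close>

definition is_join :: "'a::order set \<Rightarrow> 'a \<Rightarrow> bool" where
  "is_join S x \<longleftrightarrow> (\<forall>s\<in>S. s \<le> x) \<and> (\<forall>y. (\<forall>s\<in>S. s \<le> y) \<longrightarrow> x \<le> y)"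

definition join_spec :: "'a::order set set \<Rightarrow> bool" where
  "join_spec U \<longleftrightarrow> (\<forall>S\<in>U. \<exists>x. is_join S x) \<and> (\<forall>p. {p} \<in> U)"

definition U_ideal :: "'a::order set set \<Rightarrow> 'a set \<Rightarrow> bool" where
  "U_ideal U C \<longleftrightarrow> (\<forall>x y. x \<in> C \<longrightarrow> y \<le> x \<longrightarrow> y \<in> C)
     \<and> (\<forall>S\<in>U. S \<subseteq> C \<longrightarrow> (\<forall>x. is_join S x \<longrightarrow> x \<in> C))"

definition ideals :: "'a::order set set \<Rightarrow> 'a set set" where
  "ideals U = {C. U_ideal U C}"

text \<open>Join in the complete lattice of U-ideals ordered by inclusion
  (least U-ideal containing the union); meets are intersections.\<close>
definition ideal_join :: "'a::order set set \<Rightarrow> 'a set set \<Rightarrow> 'a set" where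
  "ideal_join U F = \<Inter>{C \<in> ideals U. \<Union>F \<subseteq> C}"

definition frame_generating :: "'a::order set set \<Rightarrow> bool" where
  "frame_generating U \<longleftrightarrow>
     (\<forall>a\<in>ideals U. \<forall>F. F \<subseteq> ideals U \<longrightarrow>
        a \<inter> ideal_join U F = ideal_join U ((\<lambda>b. a \<inter> b) ` F))"

text \<open>Frame morphism I_U -> I_V: lattice homomorphism (binary meets and joins)
  preserving arbitrary joins; only its values on U-ideals matter.\<close>
definition frame_hom :: "'a::order set set \<Rightarrow> 'a set set \<Rightarrow> ('a set \<Rightarrow> 'a set) \<Rightarrow> bool" where
  "frame_hom U V f \<longleftrightarrow> (\<forall>a\<in>ideals U. f a \<in> ideals V)
     \<and> (\<forall>a\<in>ideals U. \<forall>b\<in>ideals U. f (a \<inter> b) = f a \<inter> f b)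
     \<and> (\<forall>a\<in>ideals U. \<forall>b\<in>ideals U. f (ideal_join U {a, b}) = ideal_join V {f a, f b})
     \<and> (\<forall>F. F \<subseteq> ideals U \<longrightarrow> f (ideal_join U F) = ideal_join V (f ` F))"

definition down :: "'a::order \<Rightarrow> 'a set" where
  "down p = {q. q \<le> p}"

end

theory Submission
  imports Defs
begin

definition cl :: "'a::order set set \<Rightarrow> 'a set \<Rightarrow> 'a set" where
  "cl V X = \<Inter>{C \<in> ideals V. X \<subseteq> C}"

lemma ij_cl: "ideal_join V F = cl V (\<Union>F)"
  by (simp add: ideal_join_def cl_def)

lemma cl_ideal: "cl V X \<in> ideals V"
  unfolding cl_def ideals_def U_ideal_def by blast

lemma cl_sup: "X \<subseteq> cl V X"
  unfolding cl_def by blast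

lemma cl_least: "C \<in> ideals V \<Longrightarrow> X \<subseteq> C \<Longrightarrow> cl V X \<subseteq> C"
  unfolding cl_def by blast

lemma cl_id: "C \<in> ideals V \<Longrightarrow> cl V C = C"
  by (meson cl_least cl_sup subset_antisym order_refl)

lemma ideals_mono: "U \<subseteq> V \<Longrightarrow> ideals V \<subseteq> ideals U"
  unfolding ideals_def U_ideal_def by blast

lemma down_ideal: "down p \<in> ideals V"
  unfolding ideals_def U_ideal_def down_def is_join_def by auto

lemma down_cl: "cl V (down p) = down p"
  by (simp add: cl_id down_ideal)

lemma downclosed: "a \<in> ideals U \<Longrightarrow> \<Union>(down ` a) = a"
proof
  assume "a \<in> ideals U"
  hence dc: "\<And>x y. x \<in> a \<Longrightarrow> y \<le> x \<Longrightarrow> y \<in> a" unfolding ideals_def U_ideal_def by blast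
  show "\<Union>(down ` a) \<subseteq> a"
  proof
    fix y assume "y \<in> \<Union>(down ` a)"
    then obtain x where "x \<in> a" "y \<le> x" unfolding down_def by blast
    thus "y \<in> a" by (rule dc)
  qed
  show "a \<subseteq> \<Union>(down ` a)" unfolding down_def by blast
qed

lemma cl_mono: "X \<subseteq> Y \<Longrightarrow> cl V X \<subseteq> cl V Y"
  by (meson cl_ideal cl_least cl_sup order_trans)

lemma cl_cl: "U \<subseteq> V \<Longrightarrow> cl V (cl U X) = cl V X"
proof -
  assume "U \<subseteq> V"
  hence "cl V X \<in> ideals U" using ideals_mono cl_ideal by blast
  hence "cl U X \<subseteq> cl V X" by (simp add: cl_least cl_sup)
  hence "cl V (cl U X) \<subseteq> cl V X" by (simp add: cl_ideal cl_least)
  moreover have "cl V X \<subseteq> cl V (cl U X)" by (simp add: cl_mono cl_sup)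
  ultimately show ?thesis by blast
qed

lemma cl_meet:
  assumes fg: "frame_generating V" and a: "a \<in> ideals U" and b: "b \<in> ideals U"
  shows "cl V (a \<inter> b) = cl V a \<inter> cl V b"
proof
  show "cl V (a \<inter> b) \<subseteq> cl V a \<inter> cl V b" by (simp add: cl_mono)
next
  have da: "down ` a \<subseteq> ideals V" "down ` b \<subseteq> ideals V" using down_ideal by blast+
  have ea: "cl V a = ideal_join V (down ` a)" and eb: "cl V b = ideal_join V (down ` b)"
    using downclosed[OF a] downclosed[OF b] by (simp_all add: ij_cl)
  have inner: "cl V a \<inter> down q \<subseteq> cl V (a \<inter> b)" if q: "q \<in> b" for q
  proof -
    have "cl V a \<inter> down q = down q \<inter> cl V a" by blast
    also have "\<dots> = ideal_join V ((\<lambda>x. down q \<inter> x) ` down ` a)"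
      using fg da(1) down_ideal[of q V] unfolding frame_generating_def ea by blast
    also have "\<dots> \<subseteq> cl V (a \<inter> b)"
      unfolding ij_cl
    proof (rule cl_least[OF cl_ideal])
      show "\<Union> ((\<lambda>x. down q \<inter> x) ` down ` a) \<subseteq> cl V (a \<inter> b)"
      proof
        fix y assume "y \<in> \<Union> ((\<lambda>x. down q \<inter> x) ` down ` a)"
        then obtain p where p: "p \<in> a" "y \<le> p" "y \<le> q" unfolding down_def by auto
        have "y \<in> a" using p a unfolding ideals_def U_ideal_def by blast
        moreover have "y \<in> b" using p q b unfolding ideals_def U_ideal_def by blast
        ultimately show "y \<in> cl V (a \<inter> b)" using cl_sup by blast
      qed
    qed
    finally show ?thesis .
  qed
  have "cl V a \<inter> cl V b = ideal_join V ((\<lambda>x. cl V a \<inter> x) ` down ` b)"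
    using fg da(2) cl_ideal[of V a] unfolding frame_generating_def eb by blast
  also have "\<dots> \<subseteq> cl V (a \<inter> b)"
    unfolding ij_cl using inner by (intro cl_least[OF cl_ideal]) blast
  finally show "cl V a \<inter> cl V b \<subseteq> cl V (a \<inter> b)" .
qed

lemma cl_join:
  assumes "U \<subseteq> V" "F \<subseteq> ideals U"
  shows "cl V (ideal_join U F) = ideal_join V (cl V ` F)"
proof -
  have "cl V (ideal_join U F) = cl V (\<Union>F)" using assms(1) by (simp add: ij_cl cl_cl)
  moreover have "cl V (\<Union>(cl V ` F)) = cl V (\<Union>F)"
  proof
    show "cl V (\<Union>F) \<subseteq> cl V (\<Union>(cl V ` F))" using cl_sup by (intro cl_mono) blast
    show "cl V (\<Union>(cl V ` F)) \<subseteq> cl V (\<Union>F)"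
      by (intro cl_least[OF cl_ideal]) (meson UN_least Union_upper cl_mono)
  qed
  ultimately show ?thesis by (simp add: ij_cl)
qed

lemma cl_hom:
  assumes "U \<subseteq> V" "frame_generating V"
  shows "frame_hom U V (cl V)"
  unfolding frame_hom_def
proof (intro conjI ballI allI impI)
  fix a b assume "a \<in> ideals U" "b \<in> ideals U"
  thus "cl V (a \<inter> b) = cl V a \<inter> cl V b" using cl_meet assms by blast
  show "cl V (ideal_join U {a, b}) = ideal_join V {cl V a, cl V b}"
    using cl_join[OF assms(1), of "{a,b}"] \<open>a \<in> ideals U\<close> \<open>b \<in> ideals U\<close> by simp
next
  fix F assume "F \<subseteq> ideals U"
  thus "cl V (ideal_join U F) = ideal_join V (cl V ` F)" using cl_join assms by blast
qed (simp add: cl_ideal)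

lemma uniq:
  assumes "frame_hom U V \<psi>" "\<forall>p. \<psi> (down p) = down p" "C \<in> ideals U"
  shows "\<psi> C = cl V C"
proof -
  have F: "down ` C \<subseteq> ideals U" using down_ideal by blast
  have "C = ideal_join U (down ` C)"
    using downclosed[OF assms(3)] cl_id[OF assms(3)] by (simp add: ij_cl)
  moreover have "\<psi> (ideal_join U (down ` C)) = ideal_join V (\<psi> ` down ` C)"
    using assms(1) F unfolding frame_hom_def by blast
  ultimately have "\<psi> C = ideal_join V (\<psi> ` down ` C)" by simp
  also have "\<psi> ` down ` C = down ` C" using assms(2) by (auto simp: image_iff)
  finally show ?thesis using downclosed[OF assms(3)] by (simp add: ij_cl)
qed

theorem lemma4p1:
  fixes U1 U2 U3 :: "'a::order set set"
  assumes "join_spec U1" "join_spec U2" "join_spec U3"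
    and "frame_generating U1" "frame_generating U2" "frame_generating U3"
    and "U1 \<subseteq> U2" "U2 \<subseteq> U3"
  shows "\<exists>\<phi>1 \<phi>2 \<phi>.
     frame_hom U1 U2 \<phi>1 \<and> frame_hom U2 U3 \<phi>2 \<and> frame_hom U1 U3 \<phi>
   \<and> (\<forall>C\<in>ideals U1. \<phi> C = \<phi>2 (\<phi>1 C))
   \<and> (\<forall>p. \<phi>1 (down p) = down p) \<and> (\<forall>p. \<phi>2 (down p) = down p) \<and> (\<forall>p. \<phi> (down p) = down p)
   \<and> (\<forall>\<psi>. frame_hom U1 U2 \<psi> \<and> (\<forall>p. \<psi> (down p) = down p) \<longrightarrow> (\<forall>C\<in>ideals U1. \<psi> C = \<phi>1 C))
   \<and> (\<forall>\<psi>. frame_hom U2 U3 \<psi> \<and> (\<forall>p. \<psi> (down p) = down p) \<longrightarrow> (\<forall>C\<in>ideals U2. \<psi> C = \<phi>2 C))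
   \<and> (\<forall>\<psi>. frame_hom U1 U3 \<psi> \<and> (\<forall>p. \<psi> (down p) = down p) \<longrightarrow> (\<forall>C\<in>ideals U1. \<psi> C = \<phi> C))"
proof (rule exI[of _ "cl U2"], rule exI[of _ "cl U3"], rule exI[of _ "cl U3"], intro conjI allI impI ballI)
  have U13: "U1 \<subseteq> U3" using assms(7,8) by (rule order_trans)
  show "frame_hom U1 U2 (cl U2)" by (rule cl_hom[OF assms(7,5)])
  show "frame_hom U2 U3 (cl U3)" by (rule cl_hom[OF assms(8,6)])
  show "frame_hom U1 U3 (cl U3)" by (rule cl_hom[OF U13 assms(6)])
  fix C assume "C \<in> ideals U1"
  show "cl U3 C = cl U3 (cl U2 C)" by (rule cl_cl[OF assms(8), symmetric])
next
  fix p show "cl U2 (down p) = down p" by (rule down_cl)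
next
  fix p show "cl U3 (down p) = down p" by (rule down_cl)
next
  fix p show "cl U3 (down p) = down p" by (rule down_cl)
next
  fix \<psi> C assume h: "frame_hom U1 U2 \<psi> \<and> (\<forall>p. \<psi> (down p) = down p)" "C \<in> ideals U1"
  show "\<psi> C = cl U2 C" using uniq[of U1 U2 \<psi> C] h by blast
next
  fix \<psi> C assume h: "frame_hom U2 U3 \<psi> \<and> (\<forall>p. \<psi> (down p) = down p)" "C \<in> ideals U2"
  show "\<psi> C = cl U3 C" using uniq[of U2 U3 \<psi> C] h by blast
next
  fix \<psi> C assume h: "frame_hom U1 U3 \<psi> \<and> (\<forall>p. \<psi> (down p) = down p)" "C \<in> ideals U1"
  show "\<psi> C = cl U3 C" using uniq[of U1 U3 \<psi> C] h by blast
qed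

end
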